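(* Let $1\le r\le n$, let $p=(p_1,\dots,p_n)$ be a size vector, and let $A,B\subseteq S_p$ form a maximal pair of $r$-cross-intersecting families. If $i\in[n]$ is a relevant coordinate for $A$ or for $B$, then there exists $l\in[p_i]$ such that $$|\{x\in A: x_i\ne l\}|\le |A|/p_i\quad\text{and}\quad |\{y\in B: y_i\ne l\}|\le |B|/p_i.$$
   Context: $[m]=\{1,\dots,m\}$. A size vector is a sequence of integers $p=(p_1,\dots,p_n)$ with $p_i\ge 2$ for all $i$; $S_p=[p_1]\times\cdots\times[p_n]$. Two vectors $x,y\in S_p$ are $r$-intersecting if $|\{i: x_i=y_i\}|\ge r$; families $A,B\subseteq S_p$ are $r$-cross-intersecting if every $x\in A$, $y\in B$ are $r$-intersecting. A pair $(A,B)$ of $r$-cross-intersecting families in $S_p$ is maximal if it maximizes $|A|\cdot|B|$ among all $r$-cross-intersecting pairs in $S_p$. A coordinate $i$ is irrelevant for $A\subseteq S_p$ if whenever two elements of $S_p$ differ only in coordinate $i$ and one lies in $A$, so does the other; otherwise $i$ is relevant for $A$. *)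

theory Defs
  imports Complex_Main "HOL-Library.FuncSet"
begin

definition size_vector :: "nat \<Rightarrow> (nat \<Rightarrow> nat) \<Rightarrow> bool" where
  "size_vector n p \<longleftrightarrow> (\<forall>i\<in>{1..n}. p i \<ge> 2)"

definition Sp :: "nat \<Rightarrow> (nat \<Rightarrow> nat) \<Rightarrow> (nat \<Rightarrow> nat) set" where
  "Sp n p = (\<Pi>\<^sub>E i\<in>{1..n}. {1..p i})"

definition r_intersecting :: "nat \<Rightarrow> nat \<Rightarrow> (nat \<Rightarrow> nat) \<Rightarrow> (nat \<Rightarrow> nat) \<Rightarrow> bool" where
  "r_intersecting n r x y \<longleftrightarrow> card {i\<in>{1..n}. x i = y i} \<ge> r"

definition r_cross_intersecting ::
  "nat \<Rightarrow> nat \<Rightarrow> (nat \<Rightarrow> nat) set \<Rightarrow> (nat \<Rightarrow> nat) set \<Rightarrow> bool" where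
  "r_cross_intersecting n r A B \<longleftrightarrow> (\<forall>x\<in>A. \<forall>y\<in>B. r_intersecting n r x y)"

definition maximal_pair ::
  "nat \<Rightarrow> (nat \<Rightarrow> nat) \<Rightarrow> nat \<Rightarrow> (nat \<Rightarrow> nat) set \<Rightarrow> (nat \<Rightarrow> nat) set \<Rightarrow> bool" where
  "maximal_pair n p r A B \<longleftrightarrow>
     A \<subseteq> Sp n p \<and> B \<subseteq> Sp n p \<and> r_cross_intersecting n r A B \<and>
     (\<forall>A' B'. A' \<subseteq> Sp n p \<longrightarrow> B' \<subseteq> Sp n p \<longrightarrow> r_cross_intersecting n r A' B' \<longrightarrow>
        card A' * card B' \<le> card A * card B)"

definition irrelevant :: "nat \<Rightarrow> (nat \<Rightarrow> nat) \<Rightarrow> nat \<Rightarrow> (nat \<Rightarrow> nat) set \<Rightarrow> bool" where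
  "irrelevant n p i A \<longleftrightarrow>
     (\<forall>x\<in>Sp n p. \<forall>y\<in>Sp n p. (\<forall>j\<in>{1..n}. j \<noteq> i \<longrightarrow> x j = y j) \<longrightarrow> x \<in> A \<longrightarrow> y \<in> A)"

definition relevant :: "nat \<Rightarrow> (nat \<Rightarrow> nat) \<Rightarrow> nat \<Rightarrow> (nat \<Rightarrow> nat) set \<Rightarrow> bool" where
  "relevant n p i A \<longleftrightarrow> \<not> irrelevant n p i A"

end

theory Submission
  imports Defs
begin

definition cyl :: "nat \<Rightarrow> (nat \<Rightarrow> nat) \<Rightarrow> nat \<Rightarrow> (nat \<Rightarrow> nat) set \<Rightarrow> (nat \<Rightarrow> nat) set" where
  "cyl n p i X = {y \<in> Sp n p. \<exists>x\<in>X. y(i:=1) = x(i:=1)}"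

lemma finite_Sp: "finite (Sp n p)"
  unfolding Sp_def by (intro finite_PiE) auto

lemma upd_eq_off: "y(i:=1) = x(i:=1) \<Longrightarrow> j \<noteq> i \<Longrightarrow> y j = x j"
  by (metis fun_upd_other)

lemma card_cyl:
  assumes "X \<subseteq> Sp n p" "i \<in> {1..n}"
  shows "card (cyl n p i X) = p i * card ((\<lambda>x. x(i:=1)) ` X)"
proof -
  have "bij_betw (\<lambda>y. (y(i:=1), y i)) (cyl n p i X) ((\<lambda>x. x(i:=1)) ` X \<times> {1..p i})"
  proof (rule bij_betwI')
    fix y z assume "y \<in> cyl n p i X" "z \<in> cyl n p i X"
    show "((y(i:=1), y i) = (z(i:=1), z i)) = (y = z)"
    proof
      assume h: "(y(i:=1), y i) = (z(i:=1), z i)"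
      show "y = z"
      proof
        fix j
        have h1: "y(i:=1) = z(i:=1)" and h2: "y i = z i" using h by simp_all
        show "y j = z j"
        proof (cases "j = i")
          case True then show ?thesis using h2 by simp
        next
          case False then show ?thesis by (rule upd_eq_off[OF h1])
        qed
      qed
    qed simp
  next
    fix y assume "y \<in> cyl n p i X"
    then show "(y(i:=1), y i) \<in> (\<lambda>x. x(i:=1)) ` X \<times> {1..p i}"
      using assms(2) unfolding cyl_def Sp_def by (auto simp: PiE_iff)
  next
    fix w assume "w \<in> (\<lambda>x. x(i:=1)) ` X \<times> {1..p i}"
    then obtain x c where x: "x \<in> X" "c \<in> {1..p i}" "w = (x(i:=1), c)" by auto
    have "x \<in> Sp n p" using x assms by auto
    then have "x(i:=c) \<in> Sp n p" using x assms unfolding Sp_def by (auto simp: PiE_iff extensional_def)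
    moreover have "(x(i:=c))(i:=1) = x(i:=1)" by simp
    ultimately have "x(i:=c) \<in> cyl n p i X" using x unfolding cyl_def by blast
    then show "\<exists>y\<in>cyl n p i X. w = (y(i:=1), y i)" using x by (intro bexI[of _ "x(i:=c)"]) auto
  qed
  then have "card (cyl n p i X) = card ((\<lambda>x. x(i:=1)) ` X \<times> {1..p i})" by (rule bij_betw_same_card)
  also have "\<dots> = p i * card ((\<lambda>x. x(i:=1)) ` X)" by (simp add: card_cartesian_product)
  finally show ?thesis .
qed

lemma cyl_cross:
  assumes "\<forall>x\<in>X. \<forall>y\<in>Y. x i \<noteq> y i \<and> r_intersecting n r x y"
  shows "r_cross_intersecting n r (cyl n p i X) (cyl n p i Y)"
  unfolding r_cross_intersecting_def
proof (intro ballI)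
  fix x' y' assume x': "x' \<in> cyl n p i X" and y': "y' \<in> cyl n p i Y"
  then obtain x y where xy: "x \<in> X" "y \<in> Y" "x'(i:=1) = x(i:=1)" "y'(i:=1) = y(i:=1)"
    unfolding cyl_def by auto
  have "{j\<in>{1..n}. x j = y j} \<subseteq> {j\<in>{1..n}. x' j = y' j}"
  proof
    fix j assume j: "j \<in> {j\<in>{1..n}. x j = y j}"
    then have "j \<noteq> i" using assms xy by auto
    then have "x' j = x j" "y' j = y j" using upd_eq_off[OF xy(3)] upd_eq_off[OF xy(4)] by auto
    then show "j \<in> {j\<in>{1..n}. x' j = y' j}" using j by simp
  qed
  then have "card {j\<in>{1..n}. x j = y j} \<le> card {j\<in>{1..n}. x' j = y' j}"
    by (intro card_mono) auto
  moreover have "r_intersecting n r x y" using assms xy by blast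
  ultimately show "r_intersecting n r x' y'" unfolding r_intersecting_def by linarith
qed

lemma cyl_sub: "cyl n p i X \<subseteq> Sp n p" unfolding cyl_def by auto

lemma inj_norm:
  assumes "X \<subseteq> {x\<in>Sp n p. x i = a}"
  shows "inj_on (\<lambda>x. x(i:=1)) X"
proof
  fix x y assume xy: "x \<in> X" "y \<in> X" "x(i:=1) = y(i:=1)"
  then have "x i = y i" using assms by auto
  show "x = y"
  proof
    fix j show "x j = y j"
    proof (cases "j = i")
      case True then show ?thesis using \<open>x i = y i\<close> by simp
    next
      case False then show ?thesis using upd_eq_off[OF xy(3)[symmetric]] by simp
    qed
  qed
qed

lemma maximal_sym: "maximal_pair n p r A B \<Longrightarrow> maximal_pair n p r B A"
proof -
  have ri: "r_intersecting n r x y = r_intersecting n r y x" for x y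
  proof -
    have "{j\<in>{1..n}. x j = y j} = {j\<in>{1..n}. y j = x j}" by auto
    then show ?thesis unfolding r_intersecting_def by simp
  qed
  have s: "r_cross_intersecting n r A' B' \<Longrightarrow> r_cross_intersecting n r B' A'" for A' B'
    unfolding r_cross_intersecting_def using ri by blast
  assume m: "maximal_pair n p r A B"
  then have m1: "A \<subseteq> Sp n p" "B \<subseteq> Sp n p" "r_cross_intersecting n r A B"
    and m2: "\<And>A' B'. A' \<subseteq> Sp n p \<Longrightarrow> B' \<subseteq> Sp n p \<Longrightarrow> r_cross_intersecting n r A' B' \<Longrightarrow>
        card A' * card B' \<le> card A * card B"
    unfolding maximal_pair_def by blast+
  have "card A' * card B' \<le> card B * card A"
    if "A' \<subseteq> Sp n p" "B' \<subseteq> Sp n p" "r_cross_intersecting n r A' B'" for A' B'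
  proof -
    have "card B' * card A' \<le> card A * card B" using m2[OF that(2,1) s[OF that(3)]] .
    then show ?thesis by (simp add: mult.commute)
  qed
  then show "maximal_pair n p r B A" unfolding maximal_pair_def using m1 s by blast
qed

lemma G:
  assumes mp: "maximal_pair n p r A B" and i: "i \<in> {1..n}"
    and XY: "X \<subseteq> A" "Y \<subseteq> B" "\<forall>x\<in>X. \<forall>y\<in>Y. x i \<noteq> y i"
  shows "p i * card ((\<lambda>x. x(i:=1)) ` X) * (p i * card ((\<lambda>x. x(i:=1)) ` Y)) \<le> card A * card B"
proof -
  have AS: "A \<subseteq> Sp n p" "B \<subseteq> Sp n p" and cr: "r_cross_intersecting n r A B"
    and m2: "\<And>A' B'. A' \<subseteq> Sp n p \<Longrightarrow> B' \<subseteq> Sp n p \<Longrightarrow> r_cross_intersecting n r A' B' \<Longrightarrow>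
        card A' * card B' \<le> card A * card B"
    using mp unfolding maximal_pair_def by blast+
  have "\<forall>x\<in>X. \<forall>y\<in>Y. x i \<noteq> y i \<and> r_intersecting n r x y"
  proof (intro ballI conjI)
    fix x y assume "x \<in> X" "y \<in> Y"
    then show "x i \<noteq> y i" using XY(3) by blast
    show "r_intersecting n r x y" using cr \<open>x \<in> X\<close> \<open>y \<in> Y\<close> XY(1,2)
      unfolding r_cross_intersecting_def by blast
  qed
  then have "r_cross_intersecting n r (cyl n p i X) (cyl n p i Y)" by (rule cyl_cross)
  then have "card (cyl n p i X) * card (cyl n p i Y) \<le> card A * card B"
    by (rule m2[OF cyl_sub cyl_sub])
  moreover have "card (cyl n p i X) = p i * card ((\<lambda>x. x(i:=1)) ` X)"
    using AS XY i by (intro card_cyl) auto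
  moreover have "card (cyl n p i Y) = p i * card ((\<lambda>x. x(i:=1)) ` Y)"
    using AS XY i by (intro card_cyl) auto
  ultimately show ?thesis by simp
qed

lemma card_norm:
  assumes "A \<subseteq> Sp n p"
  shows "card ((\<lambda>x. x(i:=1)) ` {x\<in>A. x i = c}) = card {x\<in>A. x i = c}"
  by (rule card_image, rule inj_norm[where n=n and p=p and a=c]) (use assms in auto)

lemma U:
  assumes mp: "maximal_pair n p r A B" and i: "i \<in> {1..n}" and q3: "3 \<le> p i"
    and al: "\<forall>c\<in>{1..p i}. card {x\<in>A. x i = c} = a0"
    and be: "\<forall>c\<in>{1..p i}. card {y\<in>B. y i = c} = b0"
    and b0: "0 < b0" and NA: "card A = p i * a0" and NB: "card B = p i * b0"
  shows "irrelevant n p i A"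
proof -
  define q where "q = p i"
  have AS: "A \<subseteq> Sp n p" "B \<subseteq> Sp n p" using mp by (auto simp: maximal_pair_def)
  have finA: "finite A" using AS finite_Sp finite_subset by blast
  define nm where "nm = (\<lambda>x::nat\<Rightarrow>nat. x(i:=1))"
  have key: "nm ` {x\<in>A. x i = d} \<subseteq> nm ` {x\<in>A. x i = c}"
    if c: "c \<in> {1..q}" and d: "d \<in> {1..q}" for c d
  proof (cases "c = d")
    case False
    have "\<exists>e\<in>{1,2,3::nat}. e \<noteq> c \<and> e \<noteq> d" by auto
    then obtain e where e0: "e \<in> {1,2,3::nat}" "e \<noteq> c" "e \<noteq> d" by blast
    then have e: "e \<in> {1..q}" "e \<noteq> c" "e \<noteq> d" using q3 q_def by auto
    let ?X = "{x\<in>A. x i = c} \<union> {x\<in>A. x i = d}"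
    let ?Y = "{y\<in>B. y i = e}"
    have "q * card (nm ` ?X) * (q * card (nm ` ?Y)) \<le> card A * card B"
      unfolding q_def nm_def using e by (intro G[OF mp i]) auto
    moreover have "card (nm ` ?Y) = b0" using card_norm[OF AS(2)] be e q_def nm_def by auto
    ultimately have "card (nm ` ?X) * (q*q*b0) \<le> a0 * (q*q*b0)"
      using NA NB q_def by (simp add: algebra_simps)
    then have le: "card (nm ` ?X) \<le> a0" using b0 q3 q_def by simp
    have fX: "finite (nm ` ?X)" using finA by auto
    have sub: "nm ` {x\<in>A. x i = c} \<subseteq> nm ` ?X" by auto
    have "card (nm ` {x\<in>A. x i = c}) = a0" using card_norm[OF AS(1)] al c q_def nm_def by auto
    then have "nm ` {x\<in>A. x i = c} = nm ` ?X" using card_seteq[OF fX sub] le by simp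
    then show ?thesis by auto
  qed simp
  show ?thesis unfolding irrelevant_def
  proof (intro ballI impI)
    fix x y assume x: "x \<in> Sp n p" and y: "y \<in> Sp n p"
      and agr: "\<forall>j\<in>{1..n}. j \<noteq> i \<longrightarrow> x j = y j" and xA: "x \<in> A"
    have xi: "x i \<in> {1..q}" "y i \<in> {1..q}" using x y i unfolding Sp_def q_def by (auto simp: PiE_iff)
    have "x \<in> {z\<in>A. z i = x i}" using xA by simp
    then have "nm x \<in> nm ` {z\<in>A. z i = x i}" by (rule imageI)
    then have "nm x \<in> nm ` {z\<in>A. z i = y i}" using key[OF xi(2) xi(1)] by (rule rev_subsetD)
    then obtain z where z: "z \<in> A" "z i = y i" "nm z = nm x" by auto
    have zS: "z \<in> Sp n p" using z AS by auto
    have "z = y"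
    proof
      fix j show "z j = y j"
      proof (cases "j \<in> {1..n}")
        case jn: True
        show ?thesis
        proof (cases "j = i")
          case True
          then show ?thesis using z by simp
        next
          case False
          have "z j = nm z j" by (simp add: nm_def False)
          also have "\<dots> = nm x j" using z by simp
          also have "\<dots> = x j" by (simp add: nm_def False)
          also have "\<dots> = y j" using agr jn False by simp
          finally show ?thesis .
        qed
      next
        case False
        then show ?thesis using PiE_arb[OF zS[unfolded Sp_def] False] PiE_arb[OF y[unfolded Sp_def] False] by simp
      qed
    qed
    then show "y \<in> A" using z by simp
  qed
qed

lemma alg:
  fixes Q x y :: real
  assumes "Q \<ge> 2" "0\<le>x" "0\<le>y" "x<Q-1" "y<Q-1"
    "Q^2*x \<le> (Q-1)*(1+x)*(1+y)" "Q^2*y \<le> (Q-1)*(1+x)*(1+y)"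
  shows "(Q-1)*x \<le> 1"
proof (cases "y \<le> x")
  case True
  have "(Q-1)*(1+x)*(1+y) \<le> (Q-1)*(1+x)*(1+x)"
    using True assms by (intro mult_left_mono) auto
  hence "0 \<le> ((Q-1)*x - 1)*(x-(Q-1))" using assms(6) by (simp add: algebra_simps power2_eq_square)
  hence "(Q-1)*x - 1 \<le> 0" using assms(4)
    by (auto simp: zero_le_mult_iff)
  then show ?thesis by simp
next
  case False
  have "(Q-1)*(1+x)*(1+y) \<le> (Q-1)*(1+y)*(1+y)"
    using False assms by (intro mult_right_mono) auto
  hence "0 \<le> ((Q-1)*y - 1)*(y-(Q-1))" using assms(7) by (simp add: algebra_simps power2_eq_square)
  hence "(Q-1)*y - 1 \<le> 0" using assms(5)
    by (auto simp: zero_le_mult_iff)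
  moreover have "(Q-1)*x \<le> (Q-1)*y" using False assms by auto
  ultimately show ?thesis by simp
qed

lemma argmax_ex:
  fixes f :: "nat \<Rightarrow> nat"
  assumes "finite S" "S \<noteq> {}"
  shows "\<exists>a\<in>S. \<forall>c\<in>S. f c \<le> f a"
proof -
  have "Max (f ` S) \<in> f ` S" using assms by simp
  then obtain a where "a \<in> S" "f a = Max (f ` S)" by auto
  then show ?thesis using assms by (metis Max_ge finite_imageI imageI)
qed

theorem lemma9:
  fixes n r i :: nat and p :: "nat \<Rightarrow> nat" and A B :: "(nat \<Rightarrow> nat) set"
  assumes "1 \<le> r" and "r \<le> n"
    and "size_vector n p"
    and "maximal_pair n p r A B"
    and "i \<in> {1..n}"
    and "relevant n p i A \<or> relevant n p i B"
  shows "\<exists>l\<in>{1..p i}.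
           real (card {x\<in>A. x i \<noteq> l}) \<le> real (card A) / real (p i) \<and>
           real (card {y\<in>B. y i \<noteq> l}) \<le> real (card B) / real (p i)"
proof -
  note mp = assms(4) and i = assms(5)
  define q where "q = p i"
  have q2: "q \<ge> 2" using assms(3,5) by (simp add: size_vector_def q_def)
  have AS: "A \<subseteq> Sp n p" "B \<subseteq> Sp n p" and cr: "r_cross_intersecting n r A B"
    using mp by (auto simp: maximal_pair_def)
  have finA: "finite A" "finite B" using AS finite_Sp finite_subset by blast+
  define al where "al a = card {x\<in>A. x i = a}" for a
  define be where "be a = card {x\<in>B. x i = a}" for a
  define N where "N = card A"
  define M where "M = card B"
  have inI: "x \<in> Sp n p \<Longrightarrow> x i \<in> {1..q}" for x
    using i unfolding Sp_def q_def by (auto simp: PiE_iff)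
  have sumgen: "card X = (\<Sum>a\<in>{1..q}. card {x\<in>X. x i = a})" if "X \<subseteq> Sp n p" "finite X" for X
  proof -
    have "X = (\<Union>a\<in>{1..q}. {x\<in>X. x i = a})" using inI that by auto
    then have "card X = card (\<Union>a\<in>{1..q}. {x\<in>X. x i = a})" by simp
    also have "\<dots> = (\<Sum>a\<in>{1..q}. card {x\<in>X. x i = a})"
      by (rule card_UN_disjoint) (use that in auto)
    finally show ?thesis .
  qed
  have sumA: "N = (\<Sum>a\<in>{1..q}. al a)" using sumgen[OF AS(1) finA(1)] N_def al_def by simp
  have sumB: "M = (\<Sum>a\<in>{1..q}. be a)" using sumgen[OF AS(2) finA(2)] M_def be_def by simp
  have complA: "card {x\<in>A. x i \<noteq> l} = N - al l" for l
  proof -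
    have "{x\<in>A. x i \<noteq> l} = A - {x\<in>A. x i = l}" by auto
    then show ?thesis using finA unfolding N_def al_def by (simp add: card_Diff_subset)
  qed
  have complB: "card {x\<in>B. x i \<noteq> l} = M - be l" for l
  proof -
    have "{x\<in>B. x i \<noteq> l} = B - {x\<in>B. x i = l}" by auto
    then show ?thesis using finA unfolding M_def be_def by (simp add: card_Diff_subset)
  qed
  have F: "q*q*al a*be b \<le> N*M" if "a \<noteq> b" for a b
  proof -
    have "q * card ((\<lambda>x. x(i:=1)) ` {x\<in>A. x i = a}) * (q * card ((\<lambda>x. x(i:=1)) ` {x\<in>B. x i = b})) \<le> N * M"
      unfolding q_def N_def M_def using that by (intro G[OF mp i]) auto
    then show ?thesis using card_norm[OF AS(1)] card_norm[OF AS(2)] unfolding al_def be_def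
      by (simp add: algebra_simps)
  qed
  define x0 where "x0 = restrict (\<lambda>_. 1::nat) {1..n}"
  have x0S: "x0 \<in> Sp n p" using assms(3) unfolding x0_def Sp_def size_vector_def by auto
  have "{j\<in>{1..n}. x0 j = x0 j} = {1..n}" by auto
  then have "r_cross_intersecting n r {x0} {x0}"
    using assms(2) unfolding r_cross_intersecting_def r_intersecting_def by simp
  then have "card {x0} * card {x0} \<le> N * M" using mp x0S unfolding maximal_pair_def N_def M_def by blast
  then have NM: "N > 0" "M > 0" by auto
  have nonempty: "{1..q} \<noteq> {}" using q2 by auto
  obtain a where a: "a \<in> {1..q}" "\<forall>c\<in>{1..q}. al c \<le> al a" using argmax_ex[OF _ nonempty] by blast
  obtain b where b: "b \<in> {1..q}" "\<forall>c\<in>{1..q}. be c \<le> be b" using argmax_ex[OF _ nonempty] by blast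
  have NleA: "N \<le> q * al a" using sumA a sum_bounded_above[of "{1..q}" al "al a"] by simp
  have MleB: "M \<le> q * be b" using sumB b sum_bounded_above[of "{1..q}" be "be b"] by simp
  show ?thesis
  proof (cases "\<exists>a\<in>{1..q}. \<exists>b\<in>{1..q}. a \<noteq> b \<and> (\<forall>c\<in>{1..q}. al c \<le> al a) \<and> (\<forall>c\<in>{1..q}. be c \<le> be b)")
    case True
    then obtain a b where ab: "a \<in> {1..q}" "b \<in> {1..q}" "a \<noteq> b" "\<forall>c\<in>{1..q}. al c \<le> al a" "\<forall>c\<in>{1..q}. be c \<le> be b"
      by blast
    have NA: "N \<le> q * al a" using sumA ab sum_bounded_above[of "{1..q}" al "al a"] by simp
    have MB: "M \<le> q * be b" using sumB ab sum_bounded_above[of "{1..q}" be "be b"] by simp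
    have Fab: "(q*al a)*(q*be b) \<le> N*M" using F[OF ab(3)] by (simp add: algebra_simps)
    have NA': "N = q * al a"
    proof (rule ccontr)
      assume "N \<noteq> q * al a"
      then have "N < q * al a" using NA by simp
      then have "N*M < q*al a*M" using NM by simp
      also have "\<dots> \<le> q*al a*(q*be b)" using MB by simp
      finally show False using Fab by simp
    qed
    have MB': "M = q * be b"
    proof (rule ccontr)
      assume "M \<noteq> q * be b"
      then have "M < q * be b" using MB by simp
      then have "N*M < N*(q*be b)" using NM by simp
      also have "\<dots> \<le> q*al a*(q*be b)" using NA by simp
      finally show False using Fab by simp
    qed
    have allA: "\<forall>c\<in>{1..q}. al c = al a"
    proof (rule ccontr)
      assume "\<not> ?thesis"
      then obtain c where "c \<in> {1..q}" "al c < al a" using ab(4) by force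
      then have "(\<Sum>c\<in>{1..q}. al c) < (\<Sum>c\<in>{1..q}. al a)"
        using ab(4) by (intro sum_strict_mono_ex1) auto
      then show False using sumA NA' by simp
    qed
    have allB: "\<forall>c\<in>{1..q}. be c = be b"
    proof (rule ccontr)
      assume "\<not> ?thesis"
      then obtain c where "c \<in> {1..q}" "be c < be b" using ab(5) by force
      then have "(\<Sum>c\<in>{1..q}. be c) < (\<Sum>c\<in>{1..q}. be b)"
        using ab(5) by (intro sum_strict_mono_ex1) auto
      then show False using sumB MB' by simp
    qed
    show ?thesis
    proof (cases "q = 2")
      case True
      have "1 \<in> {1..q}" using q2 by simp
      then have "card {x\<in>A. x i \<noteq> 1} = al a" "card {x\<in>B. x i \<noteq> 1} = be b"
        using complA complB allA allB NA' MB' True by auto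
      then show ?thesis using NA' MB' True q_def
        by (intro bexI[of _ 1]) (auto simp: N_def M_def)
    next
      case False
      then have q3: "3 \<le> p i" using q2 q_def by simp
      have pa: "al a > 0" using NM NA' by (cases "al a") auto
      have pb: "be b > 0" using NM MB' by (cases "be b") auto
      have "irrelevant n p i A"
        by (rule U[OF mp i q3, of "al a" "be b"])
          (use allA allB pb NA' MB' in \<open>auto simp: al_def be_def q_def N_def M_def\<close>)
      moreover have "irrelevant n p i B"
        by (rule U[OF maximal_sym[OF mp] i q3, of "be b" "al a"])
          (use allA allB pa NA' MB' in \<open>auto simp: al_def be_def q_def N_def M_def\<close>)
      ultimately show ?thesis using assms(6) unfolding relevant_def by blast
    qed
  next
    case False
    have ab: "a = b" using False a b by blast
    define l where "l = a"
    have strA: "al c < al l" if "c \<in> {1..q}" "c \<noteq> l" for c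
    proof (rule ccontr)
      assume "\<not> al c < al l"
      then have dle: "\<forall>d\<in>{1..q}. al d \<le> al c" using a l_def by fastforce
      have lb: "l \<in> {1..q}" "\<forall>d\<in>{1..q}. be d \<le> be l" using b ab l_def by auto
      have "\<exists>a'\<in>{1..q}. \<exists>b'\<in>{1..q}. a' \<noteq> b' \<and> (\<forall>c\<in>{1..q}. al c \<le> al a') \<and> (\<forall>c\<in>{1..q}. be c \<le> be b')"
        by (rule bexI[of _ c], rule bexI[of _ l]) (use that dle lb in auto)
      with False show False by contradiction
    qed
    have strB: "be c < be l" if "c \<in> {1..q}" "c \<noteq> l" for c
    proof (rule ccontr)
      assume "\<not> be c < be l"
      then have dle: "\<forall>d\<in>{1..q}. be d \<le> be c" using b ab l_def by fastforce
      have la: "l \<in> {1..q}" "\<forall>d\<in>{1..q}. al d \<le> al l" using a l_def by auto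
      have "\<exists>a'\<in>{1..q}. \<exists>b'\<in>{1..q}. a' \<noteq> b' \<and> (\<forall>c\<in>{1..q}. al c \<le> al a') \<and> (\<forall>c\<in>{1..q}. be c \<le> be b')"
        by (rule bexI[of _ l], rule bexI[of _ c]) (use that dle la in auto)
      with False show False by contradiction
    qed
    define S where "S = {1..q} - {l}"
    have l: "l \<in> {1..q}" using a l_def by simp
    have cardS: "card S = q - 1" using l unfolding S_def by simp
    have Sne: "S \<noteq> {}" using cardS q2 by auto 
    define s where "s = (\<Sum>c\<in>S. al c)"
    define t where "t = (\<Sum>c\<in>S. be c)"
    have Ns: "N = al l + s" using sumA l unfolding s_def S_def by (simp add: sum.remove)
    have Mt: "M = be l + t" using sumB l unfolding t_def S_def by (simp add: sum.remove)
    have s_lt: "s < (q-1) * al l"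
    proof -
      have "s < (\<Sum>c\<in>S. al l)" unfolding s_def using strA Sne
        by (intro sum_strict_mono) (auto simp: S_def)
      then show ?thesis using cardS by simp
    qed
    have t_lt: "t < (q-1) * be l"
    proof -
      have "t < (\<Sum>c\<in>S. be l)" unfolding t_def using strB Sne
        by (intro sum_strict_mono) (auto simp: S_def)
      then show ?thesis using cardS by simp
    qed
    have s_F: "q*q*s*be l \<le> (q-1)*(N*M)"
    proof -
      have "q*q*s*be l = (\<Sum>c\<in>S. q*q*al c*be l)" unfolding s_def
        by (simp add: sum_distrib_left sum_distrib_right algebra_simps)
      also have "\<dots> \<le> (\<Sum>c\<in>S. N*M)" using F by (intro sum_mono) (auto simp: S_def)
      finally show ?thesis using cardS by simp
    qed
    have t_F: "q*q*al l*t \<le> (q-1)*(N*M)"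
    proof -
      have "q*q*al l*t = (\<Sum>c\<in>S. q*q*al l*be c)" unfolding t_def
        by (simp add: sum_distrib_left sum_distrib_right algebra_simps)
      also have "\<dots> \<le> (\<Sum>c\<in>S. N*M)" using F by (intro sum_mono) (auto simp: S_def)
      finally show ?thesis using cardS by simp
    qed
    have u0: "al l > 0" using NM Ns s_lt by (cases "al l") auto
    have v0: "be l > 0" using NM Mt t_lt by (cases "be l") auto
    define Q where "Q = real q"
    define u where "u = real (al l)"
    define v where "v = real (be l)"
    have Q2: "Q \<ge> 2" using q2 Q_def by simp
    have Qm: "real (q - 1) = Q - 1" using q2 Q_def by simp
    have u: "u > 0" using u0 u_def by simp
    have v: "v > 0" using v0 v_def by simp
    have sR: "real s < (Q-1)*u" using s_lt Qm u_def by (metis of_nat_less_iff of_nat_mult)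
    have tR: "real t < (Q-1)*v" using t_lt Qm v_def by (metis of_nat_less_iff of_nat_mult)
    have sF: "Q^2*real s*v \<le> (Q-1)*((u + real s)*(v + real t))"
    proof -
      have "real (q*q*s*be l) \<le> real ((q-1)*(N*M))" using s_F by (simp only: of_nat_le_iff)
      then show ?thesis using Ns Mt Qm unfolding Q_def u_def v_def by (simp add: power2_eq_square)
    qed
    have tF: "Q^2*u*real t \<le> (Q-1)*((u + real s)*(v + real t))"
    proof -
      have "real (q*q*al l*t) \<le> real ((q-1)*(N*M))" using t_F by (simp only: of_nat_le_iff)
      then show ?thesis using Ns Mt Qm unfolding Q_def u_def v_def by (simp add: power2_eq_square)
    qed
    define x where "x = real s / u"
    define y where "y = real t / v"
    have xy0: "0 \<le> x" "0 \<le> y" using u v x_def y_def by auto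
    have xlt: "x < Q - 1" using sR u unfolding x_def by (simp add: divide_less_eq mult.commute)
    have ylt: "y < Q - 1" using tR v unfolding y_def by (simp add: divide_less_eq mult.commute)
    have eqP: "(u + real s)*(v + real t) = u*v*((1+x)*(1+y))"
      using u v unfolding x_def y_def by (simp add: field_simps)
    have c1: "Q^2*x \<le> (Q-1)*(1+x)*(1+y)"
    proof -
      have "u*v*(Q^2*x) = Q^2*real s*v" using u unfolding x_def by (simp add: field_simps)
      also have "\<dots> \<le> (Q-1)*((u + real s)*(v + real t))" by (rule sF)
      also have "\<dots> = (Q-1)*(u*v*((1+x)*(1+y)))" by (simp only: eqP)
      also have "\<dots> = u*v*((Q-1)*(1+x)*(1+y))" by (simp add: algebra_simps)
      finally have "u*v*(Q^2*x) \<le> u*v*((Q-1)*(1+x)*(1+y))" .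
      then show ?thesis using u v by (simp add: mult_le_cancel_left_pos)
    qed
    have c2: "Q^2*y \<le> (Q-1)*(1+x)*(1+y)"
    proof -
      have "u*v*(Q^2*y) = Q^2*u*real t" using v unfolding y_def by (simp add: field_simps)
      also have "\<dots> \<le> (Q-1)*((u + real s)*(v + real t))" by (rule tF)
      also have "\<dots> = (Q-1)*(u*v*((1+x)*(1+y)))" by (simp only: eqP)
      also have "\<dots> = u*v*((Q-1)*(1+x)*(1+y))" by (simp add: algebra_simps)
      finally have "u*v*(Q^2*y) \<le> u*v*((Q-1)*(1+x)*(1+y))" .
      then show ?thesis using u v by (simp add: mult_le_cancel_left_pos)
    qed
    have rx: "(Q-1)*x \<le> 1" by (rule alg[OF Q2 xy0 xlt ylt c1 c2])
    have ry: "(Q-1)*y \<le> 1"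
      by (rule alg[OF Q2 xy0(2) xy0(1) ylt xlt]) (use c1 c2 in \<open>simp_all add: algebra_simps\<close>)
    have "(Q-1)*real s \<le> u" using rx u unfolding x_def by (simp add: field_simps)
    then have rs: "real s \<le> real N / Q" using Ns Q2 unfolding u_def by (simp add: field_simps)
    have "(Q-1)*real t \<le> v" using ry v unfolding y_def by (simp add: field_simps)
    then have rt: "real t \<le> real M / Q" using Mt Q2 unfolding v_def by (simp add: field_simps)
    have "card {x\<in>A. x i \<noteq> l} = s" "card {x\<in>B. x i \<noteq> l} = t" using complA complB Ns Mt by auto
    then show ?thesis using rs rt l unfolding Q_def q_def N_def M_def by (intro bexI[of _ l]) auto
  qed
qed

end
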